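(* Let $n$ be a positive integer and let $\mathcal F$ be an $\mathcal N$-saturated family of subsets of $[n]$. Let $A'\subseteq[n]$ with $A'\notin\mathcal F$, and suppose there exists $A\in\mathcal F$ with $A'\subset A$, and that $A'$ is a maximal element of some induced copy of $\mathcal N$ in $\mathcal F\cup\{A'\}$. Then there exists an induced copy of $\mathcal N$ in $\mathcal F\cup\{A'\}$ in which $A'$ is a maximal element and the other maximal element is a subset of $A$.
   Context: The poset $\mathcal N$ has four elements $a,b,c,d$ with $a<c$, $b<c$, $b<d$ and no other comparabilities (so $a,b$ are its minimal elements and $c,d$ its maximal elements). A family $\mathcal Q$ of sets (ordered by inclusion) contains an induced copy of $\mathcal N$ if there are distinct sets in $\mathcal Q$ whose inclusion relations are exactly those of $a,b,c,d$ above. A family $\mathcal F$ of subsets of $[n]=\{1,\dots,n\}$ is $\mathcal N$-saturated if $\mathcal F$ contains no induced copy of $\mathcal N$, but for every $S\subseteq[n]$ with $S\notin\mathcal F$, the family $\mathcal F\cup\{S\}$ contains an induced copy of $\mathcal N$. *)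

theory Defs
  imports Main
begin

definition induced_N :: "'a set set \<Rightarrow> 'a set \<Rightarrow> 'a set \<Rightarrow> 'a set \<Rightarrow> 'a set \<Rightarrow> bool" where
  "induced_N Q a b c d \<longleftrightarrow>
     a \<in> Q \<and> b \<in> Q \<and> c \<in> Q \<and> d \<in> Q \<and>
     distinct [a, b, c, d] \<and>
     a \<subset> c \<and> b \<subset> c \<and> b \<subset> d \<and>
     \<not> a \<subseteq> b \<and> \<not> b \<subseteq> a \<and>
     \<not> a \<subseteq> d \<and> \<not> d \<subseteq> a \<and>
     \<not> c \<subseteq> d \<and> \<not> d \<subseteq> c \<and>
     \<not> c \<subseteq> a \<and> \<not> c \<subseteq> b \<and> \<not> d \<subseteq> b"

definition contains_induced_N :: "'a set set \<Rightarrow> bool" where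
  "contains_induced_N Q \<longleftrightarrow> (\<exists>a b c d. induced_N Q a b c d)"

definition N_saturated :: "nat \<Rightarrow> nat set set \<Rightarrow> bool" where
  "N_saturated n F \<longleftrightarrow>
     F \<subseteq> Pow {1..n} \<and> \<not> contains_induced_N F \<and>
     (\<forall>S. S \<subseteq> {1..n} \<and> S \<notin> F \<longrightarrow> contains_induced_N (insert S F))"

end

theory Submission
  imports Defs
begin

lemma indI:
  assumes "a \<in> Q" "b \<in> Q" "c \<in> Q" "d \<in> Q" "a \<subset> c" "b \<subset> c" "b \<subset> d"
    "\<not> a \<subseteq> b" "\<not> b \<subseteq> a" "\<not> a \<subseteq> d" "\<not> d \<subseteq> a" "\<not> c \<subseteq> d" "\<not> d \<subseteq> c"
  shows "induced_N Q a b c d"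
  using assms unfolding induced_N_def by auto

lemma indD:
  assumes "induced_N Q a b c d"
  shows "a \<in> Q" "b \<in> Q" "c \<in> Q" "d \<in> Q" "a \<subset> c" "b \<subset> c" "b \<subset> d"
    "\<not> a \<subseteq> b" "\<not> b \<subseteq> a" "\<not> a \<subseteq> d" "\<not> d \<subseteq> a" "\<not> c \<subseteq> d" "\<not> d \<subseteq> c"
  using assms unfolding induced_N_def by auto

lemma key:
  assumes sat: "N_saturated n F" and aF: "a \<in> F" and bF: "b \<in> F"
  shows "G \<subseteq> F \<Longrightarrow> G \<noteq> {} \<Longrightarrow> a \<union> b \<subseteq> \<Inter>G \<Longrightarrow> \<exists>X\<in>F. a \<union> b \<subseteq> X \<and> X \<subseteq> \<Inter>G"
proof (induction "card (\<Inter>G)" arbitrary: G rule: less_induct)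
  case less
  define T where "T = \<Inter>G"
  show ?case
  proof (cases "T \<in> F")
    case True thus ?thesis using less.prems T_def by blast
  next
    case False
    have noN: "\<not> induced_N F p q r s" for p q r s
      using sat unfolding N_saturated_def contains_induced_N_def by blast
    have sub: "T \<subseteq> {1..n}" using less.prems sat unfolding N_saturated_def T_def by blast
    have finT: "finite T" using sub finite_subset by blast
    have "contains_induced_N (insert T F)"
      using sat False sub unfolding N_saturated_def by simp
    then obtain p q r s where cp: "induced_N (insert T F) p q r s"
      unfolding contains_induced_N_def by blast
    note C = indD[OF cp]
    have abT: "a \<subseteq> T" "b \<subseteq> T" using less.prems T_def by auto
    have TY: "T \<subseteq> Y" if "Y \<in> G" for Y using that T_def by blast
    have "T = p \<or> T = q \<or> T = r \<or> T = s"
    proof (rule ccontr)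
      assume "\<not> ?thesis" then have "induced_N F p q r s" using C by (intro indI) auto
      thus False using noN by blast
    qed
    then consider "T = p" | "T = q" | "T = r" | "T = s" by blast
    then show ?thesis
    proof cases
      case 1
      have qrs: "q \<in> F" "r \<in> F" "s \<in> F" using C 1 by auto
      have as: "x \<subseteq> s" if "x \<in> F" "x \<subseteq> T" for x
      proof (rule ccontr)
        assume "\<not> x \<subseteq> s"
        then have "induced_N F x q r s" using C 1 that qrs by (intro indI) blast+
        thus False using noN by blast
      qed
      have "a \<subseteq> s" "b \<subseteq> s" using as aF bF abT by auto
      moreover have "card (T \<inter> s) < card T"
        using finT C 1 by (intro psubset_card_mono) auto
      moreover have eq: "\<Inter>(insert s G) = T \<inter> s" using T_def by auto
      ultimately have "\<exists>X\<in>F. a \<union> b \<subseteq> X \<and> X \<subseteq> \<Inter>(insert s G)"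
        using less.prems qrs abT T_def by (intro less.hyps) auto
      thus ?thesis unfolding T_def by auto
    next
      case 2
      have prs: "p \<in> F" "r \<in> F" "s \<in> F" using C 2 by auto
      have as: "x \<subseteq> p" if "x \<in> F" "x \<subseteq> T" for x
      proof (rule ccontr)
        assume "\<not> x \<subseteq> p"
        then have "induced_N F p x r s" using C 2 that prs by (intro indI) blast+
        thus False using noN by blast
      qed
      have "a \<subseteq> p" "b \<subseteq> p" using as aF bF abT by auto
      moreover have "card (T \<inter> p) < card T"
        using finT C 2 by (intro psubset_card_mono) auto
      moreover have eq: "\<Inter>(insert p G) = T \<inter> p" using T_def by auto
      ultimately have "\<exists>X\<in>F. a \<union> b \<subseteq> X \<and> X \<subseteq> \<Inter>(insert p G)"
        using less.prems prs abT T_def by (intro less.hyps) auto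
      thus ?thesis unfolding T_def by auto
    next
      case 3
      have pqs: "p \<in> F" "q \<in> F" "s \<in> F" using C 3 by auto
      have "s \<subseteq> Y" if "Y \<in> G" for Y
      proof (rule ccontr)
        assume ns: "\<not> s \<subseteq> Y"
        have "Y \<in> F" using that less.prems by auto
        moreover have "T \<subseteq> Y" using TY that by auto
        ultimately have "induced_N F p q Y s" using C 3 pqs ns by (intro indI) blast+
        thus False using noN by blast
      qed
      then have "s \<subseteq> T" using T_def by blast
      thus ?thesis using C 3 by auto
    next
      case 4
      have pqr: "p \<in> F" "q \<in> F" "r \<in> F" using C 4 by auto
      have "p \<subseteq> Y" if "Y \<in> G" for Y
      proof (rule ccontr)
        assume np: "\<not> p \<subseteq> Y"
        have "Y \<in> F" using that less.prems by auto
        moreover have "T \<subseteq> Y" using TY that by auto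
        ultimately have "induced_N F p q r Y" using C 4 pqr np by (intro indI) blast+
        thus False using noN by blast
      qed
      then have "p \<subseteq> T" using T_def by blast
      thus ?thesis using C 4 by auto
    qed
  qed
qed

theorem lemma3p1:
  fixes n :: nat and F :: "nat set set" and A A' :: "nat set"
  assumes "n \<ge> 1"
    and "N_saturated n F"
    and "A' \<subseteq> {1..n}" and "A' \<notin> F"
    and "A \<in> F" and "A' \<subset> A"
    and "\<exists>a b c d. induced_N (insert A' F) a b c d \<and> (A' = c \<or> A' = d)"
  shows "\<exists>a b c d. induced_N (insert A' F) a b c d \<and>
           ((A' = c \<and> d \<subseteq> A) \<or> (A' = d \<and> c \<subseteq> A))"
proof -
  have noN: "\<not> induced_N F p q r s" for p q r s
    using assms(2) unfolding N_saturated_def contains_induced_N_def by blast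
  obtain a b c d where cp: "induced_N (insert A' F) a b c d" and m: "A' = c \<or> A' = d"
    using assms(7) by blast
  note C = indD[OF cp]
  from m show ?thesis
  proof
    assume c: "A' = c"
    have F: "a \<in> F" "b \<in> F" "d \<in> F" using C c by auto
    have "d \<subseteq> A"
    proof (rule ccontr)
      assume nd: "\<not> d \<subseteq> A"
      have "induced_N F a b A d" using C c F nd assms(5,6) by (intro indI) blast+
      thus False using noN by blast
    qed
    thus ?thesis using cp c by blast
  next
    assume d: "A' = d"
    have F: "a \<in> F" "b \<in> F" "c \<in> F" using C d by auto
    show ?thesis
    proof (cases "c \<subseteq> A")
      case True thus ?thesis using cp d by blast
    next
      case False
      have "a \<subseteq> A"
      proof (rule ccontr)
        assume na: "\<not> a \<subseteq> A"
        have "induced_N F a b c A" using C d F False na assms(5,6) by (intro indI) blast+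
        thus False using noN by blast
      qed
      moreover have "b \<subseteq> A" "a \<subseteq> c" "b \<subseteq> c" using C d assms(6) by auto
      ultimately obtain X where X: "X \<in> F" "a \<union> b \<subseteq> X" "X \<subseteq> \<Inter>{c, A}"
        using key[OF assms(2) F(1,2), of "{c, A}"] F assms(5) by auto
      have "induced_N (insert A' F) a b X A'"
        using C d X F by (intro indI) blast+
      moreover have "X \<subseteq> A" using X by auto
      ultimately show ?thesis by blast
    qed
  qed
qed

end
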